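(* Let $q$ be a prime integer different from $p$ and $0\le\ell\le r$. The ideals of $\Omega_{H_\ell}$ over $(q)\subseteq R_0$ (i.e. ideals $[I_0,\dots,I_\ell]$ with $I_0=q\mathbb{Z}$) are exactly the $\ell+1$ ideals $$\mathcal S^\ell(q)\subsetneq\mathcal L\mathcal S^{\ell-1}(q)\subsetneq\cdots\subsetneq\mathcal L^{\ell-k}\mathcal S^k(q)\subsetneq\cdots\subsetneq\mathcal L^\ell(q),$$ and all of them are prime.
   Context: Fix a prime $p$ and an integer $r\ge0$. For $0\le k\le r$ let $R_k$ be the commutative ring which is free as a $\mathbb{Z}$-module with basis $X_{k,0},\dots,X_{k,k}$ and multiplication $X_{k,i}X_{k,j}=p^{k-\max(i,j)}X_{k,\min(i,j)}$; thus $X_{k,k}=1$, and an integer $n$ is identified with $nX_{k,k}$. For $0\le k\le\ell\le r$ define: the additive map $\mathrm{ind}^\ell_k:R_k\to R_\ell$, $X_{k,i}\mapsto X_{\ell,i}$; the ring homomorphism $\mathrm{res}^\ell_k:R_\ell\to R_k$, $\mathrm{res}^\ell_k(X_{\ell,i})=p^{\ell-k}X_{k,i}$ if $i\le k$ and $=p^{\ell-i}$ if $i\ge k$; and the multiplicative map $\mathrm{jnd}^\ell_k:R_k\to R_\ell$, $$\mathrm{jnd}^\ell_k\Big(\sum_{i=0}^k m_iX_{k,i}\Big)=m_kX_{\ell,\ell}+\sum_{k\le i<\ell}\frac{m_k^{p^{\ell-i}}-m_k^{p^{\ell-i-1}}}{p^{\ell-i}}X_{\ell,i}+\sum_{0\le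 i<k}\frac{(\sum_{s=i}^k m_sp^{k-s})^{p^{\ell-k}}-(\sum_{s=i+1}^k m_sp^{k-s})^{p^{\ell-k}}}{p^{\ell-i}}X_{\ell,i}$$ ($m_i\in\mathbb{Z}$). For $k=\ell$ these maps are the identity. These data form the Burnside Tambara functor on $\mathbb{Z}/p^r\mathbb{Z}$; keeping indices $\le n$ gives $\Omega_{H_n}$. An ideal of $\Omega_{H_n}$ is a sequence $[I_0,\dots,I_n]$ of ideals $I_k\subseteq R_k$ such that for every $1\le k\le n$: $\mathrm{ind}^k_{k-1}(I_{k-1})\subseteq I_k$, $\mathrm{res}^k_{k-1}(I_k)\subseteq I_{k-1}$, $\mathrm{jnd}^k_{k-1}(I_{k-1})\subseteq I_k$; inclusion is componentwise. It is proper if $I_0\ne R_0$. A proper ideal is prime if for all $0\le\ell'\le k\le n$, $a\in R_k$, $b\in R_{\ell'}$: whenever $(\mathrm{jnd}^m_i\mathrm{res}^k_i(a))\cdot(\mathrm{jnd}^m_j\mathrm{res}^{\ell'}_j(b))\in I_m$ for all $0\le i\le k$, $0\le j\le\ell'$, $m=\max(i,j)$, then $a\in I_k$ or $b\in I_{\ell'}$. Operators: for an ideal $I\subseteq R_{k-1}$, $L(I)=(\mathrm{res}^k_{k-1})^{-1}(I)\subseteq R_k$ and $S(I)$ is the ideal of $R_k$ generated by $\mathrm{ind}^k_{k-1}(I)\cup\mathrm{jnd}^k_{k-1}(I)$; for an ideal $\mathscr I=[I_0,\dots,I_{k-1}]$ of $\Omega_{H_{k-1}}$, $\mathcal{L}\mathscr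 I=[I_0,\dots,I_{k-1},L(I_{k-1})]$, $\mathcal{S}\mathscr I=[I_0,\dots,I_{k-1},S(I_{k-1})]$; $\mathcal L^n,\mathcal S^n$ are iterates, and $(q)$ denotes the ideal $[q\mathbb{Z}]$ of $\Omega_{H_0}$. *)

theory Defs
  imports "HOL-Computational_Algebra.Primes"
begin

text \<open>An element of R_k is represented by its coefficient function
  m :: nat => int, with m i the coefficient of X_{k,i}; coefficients of
  index > k vanish.\<close>

definition Rcar :: "nat \<Rightarrow> (nat \<Rightarrow> int) set" where
  "Rcar k = {m. \<forall>i>k. m i = 0}"

text \<open>Multiplication in R_k: X_{k,i} X_{k,j} = p^(k - max i j) X_{k, min i j}.\<close>
definition Rmult :: "nat \<Rightarrow> nat \<Rightarrow> (nat \<Rightarrow> int) \<Rightarrow> (nat \<Rightarrow> int) \<Rightarrow> (nat \<Rightarrow> int)" where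
  "Rmult p k a b = (\<lambda>s. if s \<le> k then
      (\<Sum>i\<le>k. \<Sum>j\<le>k. if min i j = s then a i * b j * int p ^ (k - max i j) else 0)
    else 0)"

text \<open>ind^l_k : X_{k,i} to X_{l,i}.\<close>
definition ind :: "nat \<Rightarrow> nat \<Rightarrow> (nat \<Rightarrow> int) \<Rightarrow> (nat \<Rightarrow> int)" where
  "ind l k a = a"

definition res :: "nat \<Rightarrow> nat \<Rightarrow> nat \<Rightarrow> (nat \<Rightarrow> int) \<Rightarrow> (nat \<Rightarrow> int)" where
  "res p l k a = (\<lambda>j. if j < k then int p ^ (l - k) * a j
      else if j = k then (\<Sum>i\<in>{k..l}. int p ^ (l - i) * a i)
      else 0)"

text \<open>jnd^l_k : R_k to R_l (the divisions are exact).\<close>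
definition jnd :: "nat \<Rightarrow> nat \<Rightarrow> nat \<Rightarrow> (nat \<Rightarrow> int) \<Rightarrow> (nat \<Rightarrow> int)" where
  "jnd p l k m = (\<lambda>i.
      if i = l then m k
      else if k \<le> i \<and> i < l then
        (m k ^ (p ^ (l - i)) - m k ^ (p ^ (l - i - 1))) div (int p ^ (l - i))
      else if i < k then
        ((\<Sum>s\<in>{i..k}. m s * int p ^ (k - s)) ^ (p ^ (l - k))
          - (\<Sum>s\<in>{i+1..k}. m s * int p ^ (k - s)) ^ (p ^ (l - k))) div (int p ^ (l - i))
      else 0)"

definition is_ideal :: "nat \<Rightarrow> nat \<Rightarrow> (nat \<Rightarrow> int) set \<Rightarrow> bool" where
  "is_ideal p k I \<longleftrightarrow> I \<subseteq> Rcar k \<and> (\<lambda>_. 0) \<in> I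
     \<and> (\<forall>x\<in>I. \<forall>y\<in>I. (\<lambda>i. x i + y i) \<in> I)
     \<and> (\<forall>x\<in>I. (\<lambda>i. - x i) \<in> I)
     \<and> (\<forall>a\<in>Rcar k. \<forall>x\<in>I. Rmult p k a x \<in> I)"

definition ideal_gen :: "nat \<Rightarrow> nat \<Rightarrow> (nat \<Rightarrow> int) set \<Rightarrow> (nat \<Rightarrow> int) set" where
  "ideal_gen p k A = \<Inter>{J. is_ideal p k J \<and> A \<subseteq> J}"

definition is_omega_ideal :: "nat \<Rightarrow> nat \<Rightarrow> (nat \<Rightarrow> int) set list \<Rightarrow> bool" where
  "is_omega_ideal p n I \<longleftrightarrow> length I = n + 1
     \<and> (\<forall>k\<le>n. is_ideal p k (I ! k))
     \<and> (\<forall>k. 1 \<le> k \<and> k \<le> n \<longrightarrow>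
          ind k (k - 1) ` (I ! (k - 1)) \<subseteq> I ! k
        \<and> res p k (k - 1) ` (I ! k) \<subseteq> I ! (k - 1)
        \<and> jnd p k (k - 1) ` (I ! (k - 1)) \<subseteq> I ! k)"

definition is_prime_omega_ideal :: "nat \<Rightarrow> nat \<Rightarrow> (nat \<Rightarrow> int) set list \<Rightarrow> bool" where
  "is_prime_omega_ideal p n I \<longleftrightarrow> is_omega_ideal p n I \<and> I ! 0 \<noteq> Rcar 0
     \<and> (\<forall>l' k a b. l' \<le> k \<and> k \<le> n \<and> a \<in> Rcar k \<and> b \<in> Rcar l' \<longrightarrow>
          (\<forall>i\<le>k. \<forall>j\<le>l'. Rmult p (max i j)
               (jnd p (max i j) i (res p k i a)) (jnd p (max i j) j (res p l' j b))
             \<in> I ! (max i j))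
          \<longrightarrow> a \<in> I ! k \<or> b \<in> I ! l')"

definition Lset :: "nat \<Rightarrow> nat \<Rightarrow> (nat \<Rightarrow> int) set \<Rightarrow> (nat \<Rightarrow> int) set" where
  "Lset p k I = {a \<in> Rcar k. res p k (k - 1) a \<in> I}"

definition Sset :: "nat \<Rightarrow> nat \<Rightarrow> (nat \<Rightarrow> int) set \<Rightarrow> (nat \<Rightarrow> int) set" where
  "Sset p k I = ideal_gen p k (ind k (k - 1) ` I \<union> jnd p k (k - 1) ` I)"

definition Lop :: "nat \<Rightarrow> (nat \<Rightarrow> int) set list \<Rightarrow> (nat \<Rightarrow> int) set list" where
  "Lop p I = I @ [Lset p (length I) (last I)]"

definition Sop :: "nat \<Rightarrow> (nat \<Rightarrow> int) set list \<Rightarrow> (nat \<Rightarrow> int) set list" where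
  "Sop p I = I @ [Sset p (length I) (last I)]"

definition qideal :: "nat \<Rightarrow> (nat \<Rightarrow> int) set list" where
  "qideal q = [{m \<in> Rcar 0. int q dvd m 0}]"

definition omega_le :: "(nat \<Rightarrow> int) set list \<Rightarrow> (nat \<Rightarrow> int) set list \<Rightarrow> bool" where
  "omega_le I J \<longleftrightarrow> length I = length J \<and> (\<forall>i<length I. I ! i \<subseteq> J ! i)"

definition omega_less :: "(nat \<Rightarrow> int) set list \<Rightarrow> (nat \<Rightarrow> int) set list \<Rightarrow> bool" where
  "omega_less I J \<longleftrightarrow> omega_le I J \<and> I \<noteq> J"

end

theory Submission imports Defs "HOL-Number_Theory.Number_Theory"
begin

definition gh :: "nat \<Rightarrow> nat \<Rightarrow> nat \<Rightarrow> (nat \<Rightarrow> int) \<Rightarrow> int" where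
  "gh p k t a = (\<Sum>i\<in>{t..k}. a i * int p ^ (k - i))"

lemma gh_step: "t \<le> k \<Longrightarrow> gh p k t a = a t * int p ^ (k - t) + gh p k (Suc t) a"
  unfolding gh_def by (simp add: sum.atLeast_Suc_atMost)

lemma gh_top: "gh p k k a = a k"
  unfolding gh_def by simp

lemma gh_add: "gh p k t (\<lambda>i. x i + y i) = gh p k t x + gh p k t y"
  unfolding gh_def by (simp add: sum.distrib algebra_simps)

lemma gh_diff: "gh p k t (\<lambda>i. x i - y i) = gh p k t x - gh p k t y"
  unfolding gh_def by (simp add: sum_subtractf algebra_simps)

lemma gh_neg: "gh p k t (\<lambda>i. - x i) = - gh p k t x"
  unfolding gh_def by (simp add: sum_negf)

lemma gh_scale: "gh p k t (\<lambda>i. c * x i) = c * gh p k t x"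
  unfolding gh_def by (simp add: sum_distrib_left algebra_simps)

lemma gh_single: "t \<le> j \<Longrightarrow> j \<le> k \<Longrightarrow> gh p k t (\<lambda>i. if i = j then c else 0) = c * int p ^ (k - j)"
proof -
  assume a: "t \<le> j" "j \<le> k"
  have "(\<Sum>i\<in>{t..k}. (if i = j then c else 0) * int p ^ (k - i)) = (\<Sum>i\<in>{t..k}. if i = j then c * int p^(k-j) else 0)"
    by (rule sum.cong) auto
  then show ?thesis unfolding gh_def using a by (simp add: sum.delta)
qed

lemma fermat_int:
  fixes m :: int assumes "prime p"
  shows "int p dvd m ^ p - m"
proof -
  define a where "a = nat (m mod int p)"
  have pp: "p > 0" using assms prime_gt_0_nat by blast
  have ma: "[m = int a] (mod int p)" unfolding a_def using pp
    by (simp add: cong_def)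
  have "[a ^ p = a] (mod p)"
  proof (cases "p dvd a")
    case True
    then have "[a = 0] (mod p)" by (simp add: cong_0_iff)
    moreover have "[a ^ p = 0] (mod p)" using True pp
      by (simp add: cong_0_iff) (meson dvd_power dvd_trans)
    ultimately show ?thesis by (metis cong_sym cong_trans)
  next
    case False
    have "[a ^ (p - 1) = 1] (mod p)" using fermat_theorem[OF assms False] .
    then have "[a ^ (p - 1) * a = 1 * a] (mod p)" by (rule cong_mult) simp
    moreover have "a ^ (p - 1) * a = a ^ p" using pp
      by (metis Suc_diff_1 power_Suc2)
    ultimately show ?thesis by simp
  qed
  then have "[int a ^ p = int a] (mod int p)"
    by (metis cong_int_iff of_nat_power)
  moreover have "[m ^ p = int a ^ p] (mod int p)" using ma by (rule cong_pow)
  ultimately have "[m ^ p = m] (mod int p)" using ma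
    by (metis cong_sym cong_trans)
  then show ?thesis by (simp add: cong_iff_dvd_diff)
qed

lemma pow_p_cong:
  fixes x y :: int assumes "prime p" "e \<ge> 1" "int p ^ e dvd x - y"
  shows "int p ^ Suc e dvd x ^ p - y ^ p"
proof -
  have pp: "p > 0" using assms prime_gt_0_nat by blast
  have "int p dvd int p ^ e" using assms(2) by (simp add: dvd_power)
  then have "int p dvd x - y" using assms(3) dvd_trans by blast
  then have xy: "[x = y] (mod int p)" by (simp add: cong_iff_dvd_diff)
  have "[(\<Sum>i<p. y^(p - Suc i) * x^i) = (\<Sum>i<p. y^(p - 1))] (mod int p)"
  proof (rule cong_sum)
    fix i assume "i \<in> {..<p}"
    then have i: "i < p" by simp
    have "[y^(p - Suc i) * x^i = y^(p - Suc i) * y^i] (mod int p)"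
      by (rule cong_mult) (auto intro: cong_pow xy)
    moreover have "p - Suc i + i = p - 1" using i by simp
    then have "y^(p - Suc i) * y^i = y^(p-1)" by (metis power_add)
    ultimately show "[y^(p - Suc i) * x^i = y^(p - 1)] (mod int p)" by simp
  qed
  moreover have "(\<Sum>i<p. y^(p - 1)) = int p * y^(p-1)" by simp
  ultimately have c: "[(\<Sum>i<p. y^(p - Suc i) * x^i) = int p * y^(p-1)] (mod int p)" by simp
  have "int p dvd int p * y^(p-1)" by simp
  then have S: "int p dvd (\<Sum>i<p. y^(p - Suc i) * x^i)" using cong_dvd_iff[OF c] by simp
  have "int p ^ e * int p dvd (x - y) * (\<Sum>i<p. y^(p - Suc i) * x^i)"
    using assms(3) S by (rule mult_dvd_mono)
  moreover have "x ^ p - y ^ p = (x - y) * (\<Sum>i<p. y^(p - Suc i) * x^i)" by (rule power_diff_sumr2)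
  ultimately show ?thesis by (metis power_Suc2)
qed

lemma gh_ind:
  assumes "x \<in> Rcar n" "t \<le> n"
  shows "gh p (Suc n) t x = int p * gh p n t x"
  using assms(2)
proof (induction t rule: inc_induct)
  case base
  have "x (Suc n) = 0" using assms(1) by (simp add: Rcar_def)
  then show ?case by (simp add: gh_step gh_top)
next
  case (step t)
  then show ?case by (simp add: gh_step Suc_diff_le algebra_simps)
qed

lemma gh_res:
  assumes "t \<le> n"
  shows "gh p n t (res p (Suc n) n a) = gh p (Suc n) t a"
  using assms
proof (induction t rule: inc_induct)
  case base
  show ?case by (simp add: gh_step gh_top res_def sum.atLeast_Suc_atMost)
next
  case (step t)
  then show ?case by (simp add: gh_step res_def Suc_diff_le algebra_simps)
qed

lemma jnd_top: "jnd p l k m l = m k"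
  by (simp add: jnd_def)

lemma jnd_Rcar: "k \<le> l \<Longrightarrow> jnd p l k m \<in> Rcar l"
  by (simp add: jnd_def Rcar_def)

lemma jnd_at_n: "jnd p (Suc n) n m n = (m n ^ p - m n) div int p"
  by (simp add: jnd_def)

lemma jnd_below: "i < n \<Longrightarrow> jnd p (Suc n) n m i =
   ((gh p n i m) ^ p - (gh p n (Suc i) m) ^ p) div (int p ^ (Suc n - i))"
  by (simp add: jnd_def gh_def)

lemma gh_jnd:
  assumes "prime p" "t \<le> n"
  shows "gh p (Suc n) t (jnd p (Suc n) n m) = (gh p n t m) ^ p"
  using assms(2)
proof (induction t rule: inc_induct)
  case base
  have d: "int p dvd m n ^ p - m n" using fermat_int[OF assms(1)] .
  have "gh p (Suc n) n (jnd p (Suc n) n m) = (m n ^ p - m n) div int p * int p + m n"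
    by (simp add: gh_step gh_top jnd_at_n jnd_top)
  also have "\<dots> = m n ^ p" using d by simp
  finally show ?case by (simp add: gh_top)
next
  case (step t)
  let ?A = "gh p n t m" and ?B = "gh p n (Suc t) m"
  have "?A - ?B = m t * int p ^ (n - t)" using step(2) by (simp add: gh_step)
  then have "int p ^ (n - t) dvd ?A - ?B" by simp
  then have "int p ^ Suc (n - t) dvd ?A ^ p - ?B ^ p"
    using pow_p_cong[OF assms(1)] step(2) by simp
  then have d: "int p ^ (Suc n - t) dvd ?A ^ p - ?B ^ p" using step(2) by (simp add: Suc_diff_le)
  have "gh p (Suc n) t (jnd p (Suc n) n m) = (?A ^ p - ?B ^ p) div (int p ^ (Suc n - t)) * int p ^ (Suc n - t) + ?B ^ p"
    using step by (simp add: gh_step jnd_below)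
  also have "\<dots> = ?A ^ p" using d by simp
  finally show ?case .
qed

lemma sum_le_filter: fixes k t :: nat shows "(\<Sum>i\<le>k. if t \<le> i then f i else 0) = (\<Sum>i\<in>{t..k}. f i)"
proof -
  have e: "{i \<in> {..k}. t \<le> i} = {t..k}" by auto
  have "sum f {i \<in> {..k}. t \<le> i} = (\<Sum>i\<le>k. if t \<le> i then f i else 0)"
    by (rule sum.inter_filter[OF finite_atMost])
  then show ?thesis unfolding e by simp
qed

lemma gh_mult:
  assumes "t \<le> k"
  shows "gh p k t (Rmult p k a b) = gh p k t a * gh p k t b"
proof -
  define F where "F i j = a i * b j * int p ^ (k - max i j) * int p ^ (k - min i j)" for i j
  have 1: "gh p k t (Rmult p k a b) = (\<Sum>s\<in>{t..k}. \<Sum>i\<le>k. \<Sum>j\<le>k. if min i j = s then F i j else 0)"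
    unfolding gh_def Rmult_def
  proof (rule sum.cong)
    fix s assume s: "s \<in> {t..k}"
    show "(if s \<le> k then \<Sum>i\<le>k. \<Sum>j\<le>k. if min i j = s then a i * b j * int p ^ (k - max i j) else 0 else 0) * int p ^ (k - s)
       = (\<Sum>i\<le>k. \<Sum>j\<le>k. if min i j = s then F i j else 0)"
      using s by (auto simp: sum_distrib_right F_def intro!: sum.cong)
  qed simp
  have 2: "\<dots> = (\<Sum>i\<le>k. \<Sum>s\<in>{t..k}. \<Sum>j\<le>k. if min i j = s then F i j else 0)"
    by (rule sum.swap)
  have 3: "\<dots> = (\<Sum>i\<le>k. \<Sum>j\<le>k. \<Sum>s\<in>{t..k}. if min i j = s then F i j else 0)"
    by (rule sum.cong[OF refl], rule sum.swap)
  have 4: "\<dots> = (\<Sum>i\<le>k. \<Sum>j\<le>k. if t \<le> i then (if t \<le> j then F i j else 0) else 0)"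
    by (intro sum.cong refl) (auto simp: sum.delta)
  have 5: "\<dots> = (\<Sum>i\<in>{t..k}. \<Sum>j\<in>{t..k}. F i j)"
  proof -
    have "(\<Sum>i\<le>k. \<Sum>j\<le>k. if t \<le> i then (if t \<le> j then F i j else 0) else 0)
        = (\<Sum>i\<le>k. if t \<le> i then (\<Sum>j\<in>{t..k}. F i j) else 0)"
      by (intro sum.cong refl) (auto simp: sum_le_filter)
    also have "\<dots> = (\<Sum>i\<in>{t..k}. \<Sum>j\<in>{t..k}. F i j)"
      by (rule sum_le_filter)
    finally show ?thesis .
  qed
  have 6: "gh p k t a * gh p k t b = (\<Sum>i\<in>{t..k}. \<Sum>j\<in>{t..k}. F i j)"
    unfolding gh_def sum_product
  proof (intro sum.cong refl)
    fix i j assume "i \<in> {t..k}" "j \<in> {t..k}"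
    then have "int p ^ (k - max i j) * int p ^ (k - min i j) = int p ^ (k - i) * int p ^ (k - j)"
      by (cases "i \<le> j") (auto simp: max_def min_def mult.commute)
    then show "a i * int p ^ (k - i) * (b j * int p ^ (k - j)) = F i j"
      unfolding F_def by (metis (no_types, lifting) mult.assoc mult.left_commute)
  qed
  show ?thesis using 1 2 3 4 5 6 by simp
qed

lemma Rmult_scalar:
  assumes "a \<in> Rcar k"
  shows "Rmult p k (\<lambda>i. if i = k then c else 0) a = (\<lambda>i. c * a i)"
proof
  fix s
  show "Rmult p k (\<lambda>i. if i = k then c else 0) a s = c * a s"
  proof (cases "s \<le> k")
    case True
    have "Rmult p k (\<lambda>i. if i = k then c else 0) a s =
      (\<Sum>i\<le>k. \<Sum>j\<le>k. if min i j = s then (if i = k then c else 0) * a j * int p ^ (k - max i j) else 0)"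
      by (simp add: Rmult_def True)
    also have "\<dots> = 
      (\<Sum>i\<le>k. if i = k then (\<Sum>j\<le>k. if min k j = s then c * a j * int p ^ (k - max k j) else 0) else 0)"
      by (intro sum.cong refl) (auto intro!: sum.neutral)
    also have "\<dots> = (\<Sum>j\<le>k. if min k j = s then c * a j * int p ^ (k - max k j) else 0)"
      by (simp add: sum.delta')
    also have "\<dots> = (\<Sum>j\<le>k. if j = s then c * a s else 0)"
      by (intro sum.cong refl) (auto simp: min_def max_def)
    also have "\<dots> = c * a s" using True by (simp add: sum.delta')
    finally show ?thesis .
  next
    case False
    then show ?thesis using assms by (simp add: Rmult_def Rcar_def)
  qed
qed

definition Zs :: "nat \<Rightarrow> nat \<Rightarrow> nat \<Rightarrow> nat \<Rightarrow> (nat \<Rightarrow> int) set" where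
  "Zs p q K k = {a \<in> Rcar k. \<forall>t \<le> min k K. int q dvd gh p k t a}"

lemma Zs_mono: "K \<le> K' \<Longrightarrow> Zs p q K' k \<subseteq> Zs p q K k"
  unfolding Zs_def by auto

lemma Zs_full: "k \<le> K \<Longrightarrow> Zs p q K k = Zs p q k k"
  unfolding Zs_def by (simp add: min_def)

lemma Zs0: "Zs p q K 0 = {m \<in> Rcar 0. int q dvd m 0}"
  unfolding Zs_def by (auto simp: gh_top)

lemma Rcar_mult: "Rmult p k a b \<in> Rcar k"
  by (simp add: Rmult_def Rcar_def)

lemma Zs_ideal: "is_ideal p k (Zs p q K k)"
  unfolding is_ideal_def
proof (intro conjI ballI)
  show "Zs p q K k \<subseteq> Rcar k" unfolding Zs_def by auto
  show "(\<lambda>_. 0) \<in> Zs p q K k" unfolding Zs_def Rcar_def gh_def by simp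
  fix x assume x: "x \<in> Zs p q K k"
  show "(\<lambda>i. - x i) \<in> Zs p q K k" using x unfolding Zs_def Rcar_def by (simp add: gh_neg)
  { fix y assume y: "y \<in> Zs p q K k"
    show "(\<lambda>i. x i + y i) \<in> Zs p q K k" using x y unfolding Zs_def Rcar_def by (simp add: gh_add) }
  { fix a assume a: "a \<in> Rcar k"
    show "Rmult p k a x \<in> Zs p q K k" using x unfolding Zs_def by (simp add: Rcar_mult gh_mult) }
qed

lemma res_Rcar: "res p (Suc n) n a \<in> Rcar n"
  by (simp add: res_def Rcar_def)

lemma Lset_Zs: "K \<le> n \<Longrightarrow> Lset p (Suc n) (Zs p q K n) = Zs p q K (Suc n)"
  unfolding Lset_def Zs_def using res_Rcar by (auto simp: gh_res min_def)

lemma Rcar_Suc: "x \<in> Rcar n \<Longrightarrow> x \<in> Rcar (Suc n)"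
  by (simp add: Rcar_def)

lemma ind_Zs: "ind (Suc n) n ` Zs p q K n \<subseteq> Zs p q K (Suc n)"
proof
  fix y assume "y \<in> ind (Suc n) n ` Zs p q K n"
  then obtain x where x: "x \<in> Zs p q K n" and y: "y = x" by (auto simp: ind_def)
  have xr: "x \<in> Rcar n" using x by (simp add: Zs_def)
  have "\<forall>t \<le> min (Suc n) K. int q dvd gh p (Suc n) t x"
  proof (intro allI impI)
    fix t assume t: "t \<le> min (Suc n) K"
    show "int q dvd gh p (Suc n) t x"
    proof (cases "t = Suc n")
      case True
      then show ?thesis using xr by (simp add: gh_top Rcar_def)
    next
      case False
      then have "t \<le> min n K" using t by simp
      then show ?thesis using x xr by (simp add: Zs_def gh_ind)
    qed
  qed
  then show "y \<in> Zs p q K (Suc n)" using xr y by (simp add: Zs_def Rcar_Suc)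
qed

lemma res_Zs: "res p (Suc n) n ` Zs p q K (Suc n) \<subseteq> Zs p q K n"
  unfolding Zs_def using res_Rcar by (auto simp: gh_res)

lemma jnd_Zs:
  assumes "prime p"
  shows "jnd p (Suc n) n ` Zs p q K n \<subseteq> Zs p q K (Suc n)"
proof
  fix y assume "y \<in> jnd p (Suc n) n ` Zs p q K n"
  then obtain x where x: "x \<in> Zs p q K n" and y: "y = jnd p (Suc n) n x" by auto
  have pp: "p > 0" using assms prime_gt_0_nat by blast
  have "\<forall>t \<le> min (Suc n) K. int q dvd gh p (Suc n) t y"
  proof (intro allI impI)
    fix t assume t: "t \<le> min (Suc n) K"
    show "int q dvd gh p (Suc n) t y"
    proof (cases "t = Suc n")
      case True
      then have "n \<le> min n K" using t by simp
      then have "int q dvd gh p n n x" using x by (simp add: Zs_def)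
      then show ?thesis using True y by (simp add: gh_top jnd_top)
    next
      case False
      then have tt: "t \<le> min n K" using t by simp
      then have "int q dvd gh p n t x" using x by (simp add: Zs_def)
      then have "int q dvd (gh p n t x) ^ p" using pp by (meson dvd_power dvd_trans)
      then show ?thesis using tt y gh_jnd[OF assms] by simp
    qed
  qed
  then show "y \<in> Zs p q K (Suc n)" using y by (simp add: Zs_def jnd_Rcar)
qed

lemma Zs_omega:
  assumes "prime p"
  shows "is_omega_ideal p l (map (Zs p q K) [0..<Suc l])"
  unfolding is_omega_ideal_def
proof (intro conjI allI impI)
  show "length (map (Zs p q K) [0..<Suc l]) = l + 1" by simp
  fix k
  { assume "k \<le> l"
    then show "is_ideal p k (map (Zs p q K) [0..<Suc l] ! k)"
      by (simp add: Zs_ideal nth_map del: upt_Suc) }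
  assume k: "1 \<le> k \<and> k \<le> l"
  then obtain n where n: "k = Suc n" by (cases k) auto
  have e1: "map (Zs p q K) [0..<Suc l] ! k = Zs p q K (Suc n)" using k n
    by (simp del: upt_Suc)
  have e2: "map (Zs p q K) [0..<Suc l] ! (k - 1) = Zs p q K n" using k n
    by (simp del: upt_Suc)
  show "ind k (k - 1) ` (map (Zs p q K) [0..<Suc l] ! (k - 1)) \<subseteq> map (Zs p q K) [0..<Suc l] ! k"
    unfolding e1 e2 using ind_Zs n by simp
  show "res p k (k - 1) ` (map (Zs p q K) [0..<Suc l] ! k) \<subseteq> map (Zs p q K) [0..<Suc l] ! (k - 1)"
    unfolding e1 e2 using res_Zs n by simp
  show "jnd p k (k - 1) ` (map (Zs p q K) [0..<Suc l] ! (k - 1)) \<subseteq> map (Zs p q K) [0..<Suc l] ! k"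
    unfolding e1 e2 using jnd_Zs[OF assms] n by simp
qed

lemma Rmult_top: "Rmult p m u v m = u m * v m"
proof -
  have "Rmult p m u v m = (\<Sum>i\<le>m. \<Sum>j\<le>m. if min i j = m then u i * v j * int p ^ (m - max i j) else 0)"
    by (simp add: Rmult_def)
  also have "\<dots> = (\<Sum>i\<le>m. \<Sum>j\<le>m. if i = m then (if j = m then u m * v m else 0) else 0)"
    by (intro sum.cong refl) (auto simp: min_def max_def)
  also have "\<dots> = (\<Sum>i\<le>m. if i = m then u m * v m else 0)"
    by (intro sum.cong refl) (simp add: sum.delta')
  also have "\<dots> = u m * v m" by (simp add: sum.delta')
  finally show ?thesis .
qed

lemma res_self: "res p k t a t = gh p k t a"
  by (simp add: res_def gh_def mult.commute)

lemma Zs_prime: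
  assumes "prime p" "prime q" "q \<noteq> p"
  shows "is_prime_omega_ideal p l (map (Zs p q K) [0..<Suc l])"
  unfolding is_prime_omega_ideal_def
proof (intro conjI allI impI)
  show "is_omega_ideal p l (map (Zs p q K) [0..<Suc l])" by (rule Zs_omega[OF assms(1)])
  have e0: "map (Zs p q K) [0..<Suc l] ! 0 = Zs p q K 0" by (simp del: upt_Suc)
  have "(\<lambda>i. if i = 0 then 1 else 0) \<in> Rcar 0" by (simp add: Rcar_def)
  moreover have "q \<noteq> 1" using assms(2) by auto
  then have "(\<lambda>i. if i = 0 then 1 else 0) \<notin> Zs p q K 0"
    by (simp add: Zs0)
  ultimately show "map (Zs p q K) [0..<Suc l] ! 0 \<noteq> Rcar 0" unfolding e0 by blast
  fix l' k a b
  assume A: "l' \<le> k \<and> k \<le> l \<and> a \<in> Rcar k \<and> b \<in> Rcar l'"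
  assume H: "\<forall>i\<le>k. \<forall>j\<le>l'. Rmult p (max i j) (jnd p (max i j) i (res p k i a)) (jnd p (max i j) j (res p l' j b))
             \<in> map (Zs p q K) [0..<Suc l] ! max i j"
  show "a \<in> map (Zs p q K) [0..<Suc l] ! k \<or> b \<in> map (Zs p q K) [0..<Suc l] ! l'"
  proof (rule ccontr)
    assume "\<not> ?thesis"
    then have na: "a \<notin> Zs p q K k" and nb: "b \<notin> Zs p q K l'" using A by (auto simp del: upt_Suc)
    obtain t where t: "t \<le> min k K" "\<not> int q dvd gh p k t a" using na A by (auto simp: Zs_def)
    obtain s where s: "s \<le> min l' K" "\<not> int q dvd gh p l' s b" using nb A by (auto simp: Zs_def)
    define m where "m = max t s"
    have ml: "m \<le> l" "m \<le> K" using t s A by (auto simp: m_def)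
    have "Rmult p m (jnd p m t (res p k t a)) (jnd p m s (res p l' s b)) \<in> Zs p q K m"
      using H t s A ml unfolding m_def by (auto simp del: upt_Suc)
    then have "int q dvd gh p m m (Rmult p m (jnd p m t (res p k t a)) (jnd p m s (res p l' s b)))"
      using ml by (auto simp: Zs_def)
    then have "int q dvd gh p k t a * gh p l' s b"
      by (simp add: gh_top Rmult_top jnd_top res_self)
    moreover have "prime (int q)" using assms(2) by simp
    ultimately show False using t s by (simp add: prime_dvd_mult_iff)
  qed
qed

lemma qdiv:
  assumes "prime p" "prime q" "q \<noteq> p" "int q dvd int p * g"
  shows "int q dvd g"
proof -
  have "prime (int q)" using assms(2) by simp
  then have "int q dvd int p \<or> int q dvd g" using assms(4) by (simp add: prime_dvd_mult_iff)
  moreover have "\<not> int q dvd int p"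
  proof
    assume "int q dvd int p"
    then have "q dvd p" by simp
    then show False using assms primes_dvd_imp_eq by blast
  qed
  ultimately show ?thesis by blast
qed

lemma ideal_add: "is_ideal p k J \<Longrightarrow> x \<in> J \<Longrightarrow> y \<in> J \<Longrightarrow> (\<lambda>i. x i + y i) \<in> J"
  by (simp add: is_ideal_def)

lemma ideal_scal: "is_ideal p k J \<Longrightarrow> x \<in> J \<Longrightarrow> (\<lambda>i. c * x i) \<in> J"
proof -
  assume J: "is_ideal p k J" and x: "x \<in> J"
  have xr: "x \<in> Rcar k" using J x by (auto simp: is_ideal_def)
  have "(\<lambda>i. if i = k then c else 0) \<in> Rcar k" by (simp add: Rcar_def)
  then have "Rmult p k (\<lambda>i. if i = k then c else 0) x \<in> J" using J x by (simp add: is_ideal_def)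
  then show ?thesis using Rmult_scalar[OF xr] by simp
qed

lemma ideal_Rcar: "is_ideal p k J \<Longrightarrow> x \<in> J \<Longrightarrow> x \<in> Rcar k"
  by (auto simp: is_ideal_def)

lemma D_lemma:
  assumes pr: "prime p" "prime q" "q \<noteq> p"
    and K: "K \<le> n" and J: "is_ideal p (Suc n) J"
    and ind: "ind (Suc n) n ` Zs p q K n \<subseteq> J"
    and qX: "(\<lambda>i. if i = Suc n then int q else 0) \<in> J"
    and b: "b \<in> Zs p q K (Suc n)" and bq: "int q dvd b (Suc n)"
  shows "b \<in> J"
proof -
  obtain e where e: "b (Suc n) = int q * e" using bq by blast
  define x where "x = (\<lambda>i. b i - (if i = Suc n then b (Suc n) else 0))"
  have br: "b \<in> Rcar (Suc n)" using b by (simp add: Zs_def)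
  have xr: "x \<in> Rcar n" using br unfolding x_def Rcar_def by auto
  have "\<forall>t \<le> min n K. int q dvd gh p n t x"
  proof (intro allI impI)
    fix t assume t: "t \<le> min n K"
    have "gh p (Suc n) t x = gh p (Suc n) t b - b (Suc n)"
      unfolding x_def gh_diff using t by (simp add: gh_single)
    moreover have "int q dvd gh p (Suc n) t b" using b t by (simp add: Zs_def)
    ultimately have "int q dvd gh p (Suc n) t x" using bq by simp
    then have "int q dvd int p * gh p n t x" using gh_ind[OF xr] t by simp
    then show "int q dvd gh p n t x" using qdiv[OF pr] by blast
  qed
  then have "x \<in> Zs p q K n" using xr by (simp add: Zs_def)
  then have xJ: "x \<in> J" using ind by (auto simp: ind_def)
  have yJ: "(\<lambda>i. e * (if i = Suc n then int q else 0)) \<in> J" by (rule ideal_scal[OF J qX])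
  have "b = (\<lambda>i. x i + e * (if i = Suc n then int q else 0))"
    unfolding x_def using e by (auto simp: mult.commute)
  then show ?thesis using ideal_add[OF J xJ yJ] by simp
qed

lemma G1:
  assumes pr: "prime p" "prime q" "q \<noteq> p"
    and J: "is_ideal p (Suc n) J"
    and ind: "ind (Suc n) n ` Zs p q n n \<subseteq> J"
    and jnd: "jnd p (Suc n) n ` Zs p q n n \<subseteq> J"
  shows "Zs p q (Suc n) (Suc n) \<subseteq> J"
proof -
  have pp: "p > 0" using pr prime_gt_0_nat by blast
  define e where "e = (\<lambda>i. if i = n then int q else 0)"
  have eZ: "e \<in> Zs p q n n" unfolding Zs_def e_def Rcar_def by (simp add: gh_single)
  define y where "y = jnd p (Suc n) n e"
  have yJ: "y \<in> J" using jnd eZ y_def by auto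
  define x where "x = (\<lambda>i. (if i = Suc n then int q else 0) - y i)"
  have yr: "y \<in> Rcar (Suc n)" unfolding y_def by (simp add: jnd_Rcar)
  have xr: "x \<in> Rcar n" using yr unfolding x_def Rcar_def
    by (auto simp: y_def jnd_top e_def)
  have "\<forall>t \<le> min n n. int q dvd gh p n t x"
  proof (intro allI impI)
    fix t assume t: "t \<le> min n n"
    have "gh p (Suc n) t x = int q - (gh p n t e) ^ p"
      unfolding x_def gh_diff using t by (simp add: gh_single y_def gh_jnd[OF pr(1)])
    also have "\<dots> = int q - int q ^ p" using t by (simp add: e_def gh_single)
    finally have "int q dvd int p * gh p n t x" using gh_ind[OF xr] t pp
      by (metis dvd_diff dvd_power dvd_refl min.idem)
    then show "int q dvd gh p n t x" using qdiv[OF pr] by blast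
  qed
  then have "x \<in> Zs p q n n" using xr by (simp add: Zs_def)
  then have xJ: "x \<in> J" using ind by (auto simp: ind_def)
  have "(\<lambda>i. if i = Suc n then int q else 0) = (\<lambda>i. x i + y i)" unfolding x_def by auto
  then have qX: "(\<lambda>i. if i = Suc n then int q else 0) \<in> J" using ideal_add[OF J xJ yJ] by simp
  show ?thesis
  proof
    fix b assume b: "b \<in> Zs p q (Suc n) (Suc n)"
    then have bq: "int q dvd b (Suc n)" by (auto simp: Zs_def gh_top)
    have bZ: "b \<in> Zs p q n (Suc n)" using b Zs_mono[of n "Suc n"] by auto
    show "b \<in> J" by (rule D_lemma[OF pr order.refl[of n] J ind qX bZ bq])
  qed
qed

lemma KL:
  assumes pr: "prime p" "prime q" "q \<noteq> p"
    and K: "K \<le> n" and J: "is_ideal p (Suc n) J"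
    and ind: "ind (Suc n) n ` Zs p q K n \<subseteq> J"
    and Q: "Zs p q (Suc n) (Suc n) \<subseteq> J"
    and yJ: "y \<in> J" and yZ: "y \<in> Zs p q K (Suc n)" and yq: "\<not> int q dvd y (Suc n)"
  shows "Zs p q K (Suc n) \<subseteq> J"
proof
  fix b assume b: "b \<in> Zs p q K (Suc n)"
  have qX: "(\<lambda>i. if i = Suc n then int q else 0) \<in> J"
    using Q by (auto simp: Zs_def Rcar_def gh_single)
  have "prime (int q)" using pr(2) by simp
  then have "coprime (int q) (y (Suc n))" using yq by (rule prime_imp_coprime)
  then have "gcd (y (Suc n)) (int q) = 1" by (simp add: coprime_iff_gcd_eq_1 gcd.commute)
  then obtain u v where uv: "u * y (Suc n) + v * int q = 1" using bezout_int[of "y (Suc n)" "int q"] by auto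
  define c where "c = b (Suc n) * u"
  define z where "z = (\<lambda>i. b i - c * y i)"
  have br: "b \<in> Rcar (Suc n)" and yr: "y \<in> Rcar (Suc n)" using b yZ by (auto simp: Zs_def)
  have zZ: "z \<in> Zs p q K (Suc n)"
    using b yZ br yr unfolding Zs_def z_def Rcar_def by (auto simp: gh_diff gh_scale)
  have z1: "z (Suc n) = b (Suc n) * (1 - u * y (Suc n))" unfolding z_def c_def by (simp add: algebra_simps)
  have h: "1 - u * y (Suc n) = int q * v" using uv by (simp add: algebra_simps)
  have "z (Suc n) = int q * (b (Suc n) * v)" unfolding z1 h by (simp add: mult.left_commute)
  then have zq: "int q dvd z (Suc n)" by simp
  have zJ: "z \<in> J" by (rule D_lemma[OF pr K J ind qX zZ zq])
  have cyJ: "(\<lambda>i. c * y i) \<in> J" by (rule ideal_scal[OF J yJ])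
  have "b = (\<lambda>i. z i + c * y i)" unfolding z_def by simp
  then show "b \<in> J" using ideal_add[OF J zJ cyJ] by simp
qed

lemma Sset_Zs:
  assumes pr: "prime p" "prime q" "q \<noteq> p" and K: "Suc n \<le> K"
  shows "Sset p (Suc n) (Zs p q K n) = Zs p q K (Suc n)"
proof -
  have e1: "Zs p q K n = Zs p q n n" using K by (intro Zs_full) simp
  have e2: "Zs p q K (Suc n) = Zs p q (Suc n) (Suc n)" using K by (intro Zs_full) simp
  have "ideal_gen p (Suc n) (ind (Suc n) n ` Zs p q n n \<union> jnd p (Suc n) n ` Zs p q n n) = Zs p q (Suc n) (Suc n)"
    unfolding ideal_gen_def
  proof (rule antisym)
    show "\<Inter> {J. is_ideal p (Suc n) J \<and> ind (Suc n) n ` Zs p q n n \<union> jnd p (Suc n) n ` Zs p q n n \<subseteq> J} \<subseteq> Zs p q (Suc n) (Suc n)"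
      apply (rule Inter_lower)
      using Zs_ideal ind_Zs[of n p q "Suc n"] jnd_Zs[OF pr(1), of n q "Suc n"]
      by (simp add: Zs_full[of n "Suc n"])
    show "Zs p q (Suc n) (Suc n) \<subseteq> \<Inter> {J. is_ideal p (Suc n) J \<and> ind (Suc n) n ` Zs p q n n \<union> jnd p (Suc n) n ` Zs p q n n \<subseteq> J}"
      by (rule Inter_greatest) (auto intro: G1[OF pr, THEN subsetD])
  qed
  then show ?thesis unfolding Sset_def e1 e2 by simp
qed

lemma w_gh:
  assumes "t \<le> k"
  shows "gh p (Suc k) t (\<lambda>i. if i = Suc k then int p else if i = k then -1 else 0) = 0"
proof -
  have "(\<lambda>i. if i = Suc k then int p else if i = k then -1 else 0)
     = (\<lambda>i. (if i = Suc k then int p else 0) - (if i = k then 1 else 0))" by auto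
  then show ?thesis using assms by (simp add: gh_diff gh_single)
qed

lemma w_Rcar: "(\<lambda>i. if i = Suc k then int p else if i = k then -1 else 0) \<in> Rcar (Suc k)"
  by (simp add: Rcar_def)

lemma Sop_chain:
  assumes pr: "prime p" "prime q" "q \<noteq> p" and j: "j \<le> K"
  shows "(Sop p ^^ j) (qideal q) = map (Zs p q K) [0..<Suc j]"
  using j
proof (induction j)
  case 0
  then show ?case by (simp add: qideal_def Zs0)
next
  case (Suc j)
  then have IH: "(Sop p ^^ j) (qideal q) = map (Zs p q K) [0..<Suc j]" by simp
  have "(Sop p ^^ Suc j) (qideal q) = map (Zs p q K) [0..<Suc j] @ [Sset p (Suc j) (Zs p q K j)]"
    by (simp add: IH Sop_def del: upt_Suc) (simp add: last_map)
  also have "\<dots> = map (Zs p q K) [0..<Suc (Suc j)]"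
    using Sset_Zs[OF pr Suc(2)] by simp
  finally show ?case .
qed

lemma Lop_chain:
  "(Lop p ^^ m) (map (Zs p q K) [0..<Suc K]) = map (Zs p q K) [0..<Suc (K + m)]"
proof (induction m)
  case 0
  then show ?case by simp
next
  case (Suc m)
  have "(Lop p ^^ Suc m) (map (Zs p q K) [0..<Suc K]) = map (Zs p q K) [0..<Suc (K + m)] @ [Lset p (Suc (K + m)) (Zs p q K (K + m))]"
    by (simp add: Suc Lop_def del: upt_Suc) (simp add: last_map)
  also have "\<dots> = map (Zs p q K) [0..<Suc (K + Suc m)]"
    using Lset_Zs[of K "K + m" p q] by simp
  finally show ?case .
qed

lemma chain_eq:
  assumes pr: "prime p" "prime q" "q \<noteq> p" and K: "K \<le> l"
  shows "(Lop p ^^ (l - K)) ((Sop p ^^ K) (qideal q)) = map (Zs p q K) [0..<Suc l]"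
  using Sop_chain[OF pr order.refl[of K]] Lop_chain[where p=p and m="l - K" and q=q and K=K] K by (simp del: upt_Suc)

lemma char:
  assumes pr: "prime p" "prime q" "q \<noteq> p"
    and I: "is_omega_ideal p l I" and I0: "I ! 0 = {m \<in> Rcar 0. int q dvd m 0}"
  shows "\<exists>K \<le> l. I = map (Zs p q K) [0..<Suc l]"
proof -
  have main: "k \<le> l \<Longrightarrow> (\<exists>K \<le> k. \<forall>j \<le> k. I ! j = Zs p q K j)" for k
  proof (induction k)
    case 0
    then show ?case using I0 by (auto simp: Zs0)
  next
    case (Suc k)
    then obtain K where K: "K \<le> k" and hj: "\<forall>j \<le> k. I ! j = Zs p q K j" by auto
    define J where "J = I ! Suc k"
    have Ik: "I ! k = Zs p q K k" using hj by simp
    have Jid: "is_ideal p (Suc k) J" using I Suc(2) unfolding is_omega_ideal_def J_def by blast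
    have om: "ind (Suc k) k ` (I ! k) \<subseteq> J \<and> res p (Suc k) k ` J \<subseteq> I ! k \<and> jnd p (Suc k) k ` (I ! k) \<subseteq> J"
      using I Suc(2) unfolding is_omega_ideal_def J_def
      by (metis diff_Suc_1 le_add1 plus_1_eq_Suc)
    have indJ: "ind (Suc k) k ` Zs p q K k \<subseteq> J" and jndJ: "jnd p (Suc k) k ` Zs p q K k \<subseteq> J"
      and resJ: "res p (Suc k) k ` J \<subseteq> Zs p q K k" using om Ik by auto
    have sub: "Zs p q k k \<subseteq> Zs p q K k" using K by (rule Zs_mono)
    have Q: "Zs p q (Suc k) (Suc k) \<subseteq> J"
      using G1[OF pr Jid] indJ jndJ sub by blast
    have up: "J \<subseteq> Zs p q K (Suc k)"
    proof
      fix a assume a: "a \<in> J"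
      have "a \<in> Rcar (Suc k)" using ideal_Rcar[OF Jid a] .
      moreover have "res p (Suc k) k a \<in> Zs p q K k" using resJ a by auto
      ultimately have "a \<in> Lset p (Suc k) (Zs p q K k)" by (simp add: Lset_def)
      then show "a \<in> Zs p q K (Suc k)" using Lset_Zs[OF K] by simp
    qed
    show ?case
    proof (cases "K < k")
      case True
      then obtain k' where k': "k = Suc k'" and Kk': "K \<le> k'" by (cases k) auto
      define w where "w = (\<lambda>i. if i = Suc k' then int p else if i = k' then -1 else (0::int))"
      have wZ: "w \<in> Zs p q K k" unfolding Zs_def k' w_def using Kk' w_Rcar by (auto simp: w_gh)
      define y where "y = jnd p (Suc k) k w"
      have yJ: "y \<in> J" using jndJ wZ y_def by auto
      have pp: "p > 0" using pr prime_gt_0_nat by blast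
      have yZ: "y \<in> Zs p q K (Suc k)"
        unfolding Zs_def y_def using Kk' k' pp
        by (auto simp: jnd_Rcar gh_jnd[OF pr(1)] w_def w_gh zero_power)
      have "y (Suc k) = int p" by (simp add: y_def jnd_top w_def k')
      moreover have "\<not> int q dvd int p" using pr primes_dvd_imp_eq by auto
      ultimately have yq: "\<not> int q dvd y (Suc k)" by simp
      have "Zs p q K (Suc k) \<subseteq> J" by (rule KL[OF pr K Jid indJ Q yJ yZ yq])
      then have "J = Zs p q K (Suc k)" using up by blast
      then show ?thesis using hj K J_def by (intro exI[of _ K]) (auto simp: le_Suc_eq)
    next
      case False
      then have Kk: "K = k" using K by simp
      show ?thesis
      proof (cases "J = Zs p q (Suc k) (Suc k)")
        case True
        note JQ = True
        have "\<forall>j \<le> Suc k. I ! j = Zs p q (Suc k) j"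
        proof (intro allI impI)
          fix j assume j: "j \<le> Suc k"
          show "I ! j = Zs p q (Suc k) j"
          proof (cases "j = Suc k")
            case True
            then show ?thesis using JQ J_def by simp
          next
            case False
            then have "j \<le> k" using j by simp
            then have "I ! j = Zs p q k j" using hj Kk by simp
            also have "\<dots> = Zs p q j j" using \<open>j \<le> k\<close> by (rule Zs_full)
            also have "\<dots> = Zs p q (Suc k) j" using \<open>j \<le> k\<close> by (intro Zs_full[symmetric]) simp
            finally show ?thesis .
          qed
        qed
        then show ?thesis by blast
      next
        case False
        then obtain a where aJ: "a \<in> J" and na: "a \<notin> Zs p q (Suc k) (Suc k)" using Q by blast
        have aZ: "a \<in> Zs p q k (Suc k)" using up aJ Kk by auto
        have aq: "\<not> int q dvd a (Suc k)"
        proof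
          assume aq: "int q dvd a (Suc k)"
          have "a \<in> Zs p q (Suc k) (Suc k)"
            unfolding Zs_def
          proof (intro CollectI conjI allI impI)
            show "a \<in> Rcar (Suc k)" using aZ by (simp add: Zs_def)
            fix t assume t: "t \<le> min (Suc k) (Suc k)"
            show "int q dvd gh p (Suc k) t a"
            proof (cases "t = Suc k")
              case True then show ?thesis using aq by (simp add: gh_top)
            next
              case False then show ?thesis using aZ t by (simp add: Zs_def)
            qed
          qed
          then show False using na by simp
        qed
        have indJ': "ind (Suc k) k ` Zs p q k k \<subseteq> J" using indJ Kk by simp
        have "Zs p q k (Suc k) \<subseteq> J"
          by (rule KL[OF pr order.refl[of k] Jid indJ' Q aJ aZ aq])
        then have "J = Zs p q K (Suc k)" using up Kk by blast
        then show ?thesis using hj K J_def by (intro exI[of _ K]) (auto simp: le_Suc_eq)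
      qed
    qed
  qed
  obtain K where K: "K \<le> l" and hj: "\<forall>j \<le> l. I ! j = Zs p q K j" using main[of l] by auto
  have "length I = Suc l" using I by (simp add: is_omega_ideal_def)
  then have "I = map (Zs p q K) [0..<Suc l]"
    using hj by (intro nth_equalityI) (auto simp del: upt_Suc)
  then show ?thesis using K by blast
qed

theorem proposition6:
  fixes p q r l :: nat
  assumes "prime p" and "prime q" and "q \<noteq> p" and "l \<le> r"
  shows "{I. is_omega_ideal p l I \<and> I ! 0 = {m \<in> Rcar 0. int q dvd m 0}}
           = {(Lop p ^^ (l - k)) ((Sop p ^^ k) (qideal q)) | k. k \<le> l}
       \<and> (\<forall>k<l. omega_less ((Lop p ^^ (l - (k + 1))) ((Sop p ^^ (k + 1)) (qideal q)))
                            ((Lop p ^^ (l - k)) ((Sop p ^^ k) (qideal q))))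
       \<and> (\<forall>k\<le>l. is_prime_omega_ideal p l ((Lop p ^^ (l - k)) ((Sop p ^^ k) (qideal q))))"
proof -
  note pr = assms(1,2,3)
  have ch: "K \<le> l \<Longrightarrow> (Lop p ^^ (l - K)) ((Sop p ^^ K) (qideal q)) = map (Zs p q K) [0..<Suc l]" for K
    by (rule chain_eq[OF pr])
  have P1: "{I. is_omega_ideal p l I \<and> I ! 0 = {m \<in> Rcar 0. int q dvd m 0}}
           = {(Lop p ^^ (l - k)) ((Sop p ^^ k) (qideal q)) | k. k \<le> l}"
  proof (intro equalityI subsetI)
    fix I assume "I \<in> {I. is_omega_ideal p l I \<and> I ! 0 = {m \<in> Rcar 0. int q dvd m 0}}"
    then obtain K where "K \<le> l" "I = map (Zs p q K) [0..<Suc l]" using char[OF pr] by blast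
    then have "I = (Lop p ^^ (l - K)) ((Sop p ^^ K) (qideal q))" using ch by simp
    then show "I \<in> {(Lop p ^^ (l - k)) ((Sop p ^^ k) (qideal q)) | k. k \<le> l}" using \<open>K \<le> l\<close> by blast
  next
    fix I assume "I \<in> {(Lop p ^^ (l - k)) ((Sop p ^^ k) (qideal q)) | k. k \<le> l}"
    then obtain K where K: "K \<le> l" "I = map (Zs p q K) [0..<Suc l]" using ch by auto
    have "I ! 0 = Zs p q K 0" using K by (simp del: upt_Suc)
    then show "I \<in> {I. is_omega_ideal p l I \<and> I ! 0 = {m \<in> Rcar 0. int q dvd m 0}}"
      using K Zs_omega[OF pr(1)] by (simp add: Zs0 del: upt_Suc)
  qed
  have P2: "\<forall>k<l. omega_less ((Lop p ^^ (l - (k + 1))) ((Sop p ^^ (k + 1)) (qideal q)))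
                            ((Lop p ^^ (l - k)) ((Sop p ^^ k) (qideal q)))"
  proof (intro allI impI)
    fix k assume k: "k < l"
    have e1: "(Lop p ^^ (l - (k + 1))) ((Sop p ^^ (k + 1)) (qideal q)) = map (Zs p q (Suc k)) [0..<Suc l]"
      using ch[of "k+1"] k by simp
    have e2: "(Lop p ^^ (l - k)) ((Sop p ^^ k) (qideal q)) = map (Zs p q k) [0..<Suc l]"
      using ch[of k] k by simp
    have le: "omega_le (map (Zs p q (Suc k)) [0..<Suc l]) (map (Zs p q k) [0..<Suc l])"
      unfolding omega_le_def using Zs_mono[of k "Suc k" p q]
      by (auto simp del: upt_Suc)
    define w where "w = (\<lambda>i. if i = Suc k then int p else if i = k then -1 else (0::int))"
    have wZ: "w \<in> Zs p q k (Suc k)" unfolding Zs_def w_def using w_Rcar by (auto simp: w_gh)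
    have "\<not> int q dvd int p" using pr primes_dvd_imp_eq by auto
    then have wn: "w \<notin> Zs p q (Suc k) (Suc k)" by (auto simp: Zs_def w_def gh_top)
    have "map (Zs p q (Suc k)) [0..<Suc l] ! Suc k \<noteq> map (Zs p q k) [0..<Suc l] ! Suc k"
      using wZ wn k by (auto simp del: upt_Suc)
    then have "map (Zs p q (Suc k)) [0..<Suc l] \<noteq> map (Zs p q k) [0..<Suc l]" by metis
    then show "omega_less ((Lop p ^^ (l - (k + 1))) ((Sop p ^^ (k + 1)) (qideal q)))
                            ((Lop p ^^ (l - k)) ((Sop p ^^ k) (qideal q)))"
      unfolding e1 e2 omega_less_def using le by simp
  qed
  have P3: "\<forall>k\<le>l. is_prime_omega_ideal p l ((Lop p ^^ (l - k)) ((Sop p ^^ k) (qideal q)))"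
    using ch Zs_prime[OF pr] by simp
  show ?thesis using P1 P2 P3 by blast
qed

end
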